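(* Let $n\ge1$, $\sigma\in S_n$, and let $\Lambda$ be a growth associated with $\sigma$ with $P(\Lambda)=P$ and $Q(\Lambda)=Q$. Then \[ \frac{(1-t)^n}{(1-q)^n}\,\mathcal{P}(\Lambda)=\overline{\mathcal{P}}(\Lambda)\,\psi_P(q,t)\,\varphi_Q(q,t). \]
   Context: All quantities are rational functions of indeterminates $q,t$. Partitions are Young diagrams in French convention (cells $(x,y)\in\mathbb{Z}_{>0}^2$ with $x\le\lambda_y$), $\lambda'$ the conjugate; for $c=(x,y)\in\lambda$, $a_\lambda(c)=\lambda_y-x$, $\ell_\lambda(c)=\lambda'_x-y$; $n(\kappa)=\sum_{c\in\kappa}\ell_\kappa(c)$, $n'(\kappa)=\sum_{c\in\kappa}a_\kappa(c)$, $n(\rho/\kappa)=n(\rho)-n(\kappa)$, $n'(\rho/\kappa)=n'(\rho)-n'(\kappa)$. $\mathcal{U}(\lambda)$, $\mathcal{D}(\lambda)$: partitions obtained by adding, resp. removing, one cell; $\mathcal{D}^*(\lambda)=\mathcal{D}(\lambda)\cup\{\lambda\}$. For $\kappa\subseteq\rho$, $\mathcal{R}_{\rho/\kappa}$ (resp. $\mathcal{C}_{\rho/\kappa}$): cells of $\kappa$ in a row (resp. column) containing a cell of $\rho/\kappa$. $[i,j]=1-q^it^j$, $b_{i,j}=[i,j+1]/[i+1,j]$, $b_\lambda(c)=b_{a_\lambda(c),\ell_\lambda(c)}$. For $\kappa\lessdot\rho$ (one-cell difference): $\psi_{\rho/\kappa}=\prod_{c\in\mathcal{R}_{\rho/\kappa}}\frac{b_\kappa(c)}{b_\rho(c)}$,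 $\varphi_{\rho/\kappa}=\frac{1-t}{1-q}\prod_{c\in\mathcal{C}_{\rho/\kappa}}\frac{b_\rho(c)}{b_\kappa(c)}$. For a standard Young tableau $T$ with $n$ cells and $T^{(i)}$ the shape of entries $\le i$: $\psi_T=\prod_{i=1}^n\psi_{T^{(i)}/T^{(i-1)}}$, $\varphi_T=\prod_{i=1}^n\varphi_{T^{(i)}/T^{(i-1)}}$. For $\kappa\lessdot\rho$: $\alpha_{\rho/\kappa}=\prod_{c\in\mathcal{R}_{\rho/\kappa}}\frac{[a_\kappa(c),\ell_\kappa(c)+1]}{[a_\rho(c),\ell_\rho(c)+1]}\prod_{c\in\mathcal{C}_{\rho/\kappa}}\frac{[a_\kappa(c)+1,\ell_\kappa(c)]}{[a_\rho(c)+1,\ell_\rho(c)]}$, $\overline{\alpha}_{\rho/\kappa}=\prod_{c\in\mathcal{R}_{\rho/\kappa}}\frac{[a_\kappa(c)+1,\ell_\kappa(c)]}{[a_\rho(c)+1,\ell_\rho(c)]}\prod_{c\in\mathcal{C}_{\rho/\kappa}}\frac{[a_\kappa(c),\ell_\kappa(c)+1]}{[a_\rho(c),\ell_\rho(c)+1]}$, $\beta=1/\alpha$, $\overline{\beta}=1/\overline{\alpha}$. Local probabilities: $\mathcal{P}_\lambda(\lambda\rightarrow\nu)=t^{n(\nu/\lambda)}\alpha_{\nu/\lambda}$, $\overline{\mathcal{P}}_\lambda(\lambda\leftarrow\nu)=t^{n(\nu/\lambda)}\overline{\alpha}_{\nu/\lambda}$; for $\mu\in\mathcal{D}(\lambda)$,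 $\nu\in\mathcal{U}(\lambda)$, with $A=n'(\lambda/\mu)-n'(\nu/\lambda)$, $B=n(\nu/\lambda)-n(\lambda/\mu)$, $\gamma=\frac{(1-q^At^B)(1-q^{A+1}t^{B-1})}{(1-q)(1-t)}$: $\mathcal{P}_\lambda(\mu\rightarrow\nu)=t^{B-1}\alpha_{\nu/\lambda}\beta_{\lambda/\mu}/\gamma$, $\overline{\mathcal{P}}_\lambda(\mu\leftarrow\nu)=t^{B-1}\overline{\alpha}_{\nu/\lambda}\overline{\beta}_{\lambda/\mu}/\gamma$. Growths: for $\sigma\in S_n$, take the $n\times n$ grid with vertices $(i,j)$, $0\le i,j\le n$ (matrix coordinates); square $(i,j)$ has vertices NW $(i-1,j-1)$, NE $(i-1,j)$, SW $(i,j-1)$, SE $(i,j)$ and contains a 1 iff $i=\sigma(j)$. A growth associated with $\sigma$ is a labeling $\Lambda_{ij}$ by partitions with $\Lambda_{ij}\subseteq\Lambda_{i,j+1}$, $\Lambda_{ij}\subseteq\Lambda_{i+1,j}$, and $|\Lambda_{ij}|$ = number of squares $(i',j')$ with $i'\le i$, $j'\le j$ containing a 1. $P(\Lambda)$ (resp. $Q(\Lambda)$) has entry $i$ in the cell $\Lambda_{i,n}/\Lambda_{i-1,n}$ (resp. $\Lambda_{n,i}/\Lambda_{n,i-1}$). A square is of type III if its NE and SW vertices are both $\lambda$, NW vertex $\mu\in\mathcal{D}^*(\lambda)$, SE vertex $\nu\in\mathcal{U}(\lambda)$; then $\mathcal{P}(\square)=\mathcal{P}_\lambda(\mu\rightarrow\nu)$,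 $\overline{\mathcal{P}}(\square)=\overline{\mathcal{P}}_\lambda(\mu\leftarrow\nu)$; otherwise both equal 1. $\mathcal{P}(\Lambda)=\prod_\square\mathcal{P}(\square)$, $\overline{\mathcal{P}}(\Lambda)=\prod_\square\overline{\mathcal{P}}(\square)$. *)

theory Defs
  imports Complex_Main "HOL-Combinatorics.Permutations"
    "HOL-Computational_Algebra.Polynomial" "HOL-Computational_Algebra.Fraction_Field"
begin

text \<open>The field Q(q,t) is realised as the fraction field of Z[t][q]
  (type int poly poly fract): the outer polynomial variable is t, the inner one is q.\<close>

type_synonym ratfun = "int poly poly fract"

definition q_ind :: ratfun where "q_ind = Fract [:[:0, 1:]:] 1"
definition t_ind :: ratfun where "t_ind = Fract [:0, 1:] 1"

section \<open>Partitions as Young diagrams (French convention), cells (x,y) with x,y >= 1\<close>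

type_synonym cell = "nat \<times> nat"
type_synonym diagram = "cell set"

definition is_partition :: "diagram \<Rightarrow> bool" where
  "is_partition S \<longleftrightarrow> finite S \<and>
     (\<forall>x y. (x, y) \<in> S \<longrightarrow> 1 \<le> x \<and> 1 \<le> y \<and>
        (\<forall>x' y'. 1 \<le> x' \<and> x' \<le> x \<and> 1 \<le> y' \<and> y' \<le> y \<longrightarrow> (x', y') \<in> S))"

definition row_len :: "diagram \<Rightarrow> nat \<Rightarrow> nat" where
  "row_len S y = card {x. (x, y) \<in> S}"
definition col_len :: "diagram \<Rightarrow> nat \<Rightarrow> nat" where
  "col_len S x = card {y. (x, y) \<in> S}"

definition arm :: "diagram \<Rightarrow> cell \<Rightarrow> nat" where
  "arm S c = row_len S (snd c) - fst c"
definition leg :: "diagram \<Rightarrow> cell \<Rightarrow> nat" where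
  "leg S c = col_len S (fst c) - snd c"

definition n_stat :: "diagram \<Rightarrow> int" where
  "n_stat S = (\<Sum>c\<in>S. int (leg S c))"
definition n'_stat :: "diagram \<Rightarrow> int" where
  "n'_stat S = (\<Sum>c\<in>S. int (arm S c))"

definition n_skew :: "diagram \<Rightarrow> diagram \<Rightarrow> int" where
  "n_skew \<rho> \<kappa> = n_stat \<rho> - n_stat \<kappa>"
definition n'_skew :: "diagram \<Rightarrow> diagram \<Rightarrow> int" where
  "n'_skew \<rho> \<kappa> = n'_stat \<rho> - n'_stat \<kappa>"

definition covers :: "diagram \<Rightarrow> diagram \<Rightarrow> bool" where
  "covers \<kappa> \<rho> \<longleftrightarrow> is_partition \<kappa> \<and> is_partition \<rho> \<and> \<kappa> \<subseteq> \<rho> \<and> card (\<rho> - \<kappa>) = 1"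

definition Ups :: "diagram \<Rightarrow> diagram set" where
  "Ups lam = {\<nu>. covers lam \<nu>}"
definition Dns :: "diagram \<Rightarrow> diagram set" where
  "Dns lam = {\<mu>. covers \<mu> lam}"
definition Dns_star :: "diagram \<Rightarrow> diagram set" where
  "Dns_star lam = Dns lam \<union> {lam}"

definition Rset :: "diagram \<Rightarrow> diagram \<Rightarrow> diagram" where
  "Rset \<rho> \<kappa> = {c \<in> \<kappa>. \<exists>x'. (x', snd c) \<in> \<rho> - \<kappa>}"
definition Cset :: "diagram \<Rightarrow> diagram \<Rightarrow> diagram" where
  "Cset \<rho> \<kappa> = {c \<in> \<kappa>. \<exists>y'. (fst c, y') \<in> \<rho> - \<kappa>}"

definition brk :: "'a::field \<Rightarrow> 'a \<Rightarrow> nat \<Rightarrow> nat \<Rightarrow> 'a" where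
  "brk q t i j = 1 - q ^ i * t ^ j"

definition bij_wt :: "'a::field \<Rightarrow> 'a \<Rightarrow> nat \<Rightarrow> nat \<Rightarrow> 'a" where
  "bij_wt q t i j = brk q t i (j + 1) / brk q t (i + 1) j"

definition b_cell :: "'a::field \<Rightarrow> 'a \<Rightarrow> diagram \<Rightarrow> cell \<Rightarrow> 'a" where
  "b_cell q t S c = bij_wt q t (arm S c) (leg S c)"

definition psi_skew :: "'a::field \<Rightarrow> 'a \<Rightarrow> diagram \<Rightarrow> diagram \<Rightarrow> 'a" where
  "psi_skew q t \<rho> \<kappa> = (\<Prod>c\<in>Rset \<rho> \<kappa>. b_cell q t \<kappa> c / b_cell q t \<rho> c)"

definition phi_skew :: "'a::field \<Rightarrow> 'a \<Rightarrow> diagram \<Rightarrow> diagram \<Rightarrow> 'a" where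
  "phi_skew q t \<rho> \<kappa> = (1 - t) / (1 - q) * (\<Prod>c\<in>Cset \<rho> \<kappa>. b_cell q t \<rho> c / b_cell q t \<kappa> c)"

text \<open>A tableau is given by its shape sh and a filling T : cell => nat;
  T^(i) is the set of cells of sh with entry at most i.\<close>
definition tab_sub :: "diagram \<Rightarrow> (cell \<Rightarrow> nat) \<Rightarrow> nat \<Rightarrow> diagram" where
  "tab_sub sh T i = {c \<in> sh. T c \<le> i}"

definition psi_tab :: "'a::field \<Rightarrow> 'a \<Rightarrow> diagram \<Rightarrow> (cell \<Rightarrow> nat) \<Rightarrow> 'a" where
  "psi_tab q t sh T = (\<Prod>i\<in>{1..card sh}. psi_skew q t (tab_sub sh T i) (tab_sub sh T (i - 1)))"

definition phi_tab :: "'a::field \<Rightarrow> 'a \<Rightarrow> diagram \<Rightarrow> (cell \<Rightarrow> nat) \<Rightarrow> 'a" where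
  "phi_tab q t sh T = (\<Prod>i\<in>{1..card sh}. phi_skew q t (tab_sub sh T i) (tab_sub sh T (i - 1)))"

definition alpha :: "'a::field \<Rightarrow> 'a \<Rightarrow> diagram \<Rightarrow> diagram \<Rightarrow> 'a" where
  "alpha q t \<rho> \<kappa> =
     (\<Prod>c\<in>Rset \<rho> \<kappa>. brk q t (arm \<kappa> c) (leg \<kappa> c + 1) / brk q t (arm \<rho> c) (leg \<rho> c + 1)) *
     (\<Prod>c\<in>Cset \<rho> \<kappa>. brk q t (arm \<kappa> c + 1) (leg \<kappa> c) / brk q t (arm \<rho> c + 1) (leg \<rho> c))"

definition alpha_bar :: "'a::field \<Rightarrow> 'a \<Rightarrow> diagram \<Rightarrow> diagram \<Rightarrow> 'a" where
  "alpha_bar q t \<rho> \<kappa> =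
     (\<Prod>c\<in>Rset \<rho> \<kappa>. brk q t (arm \<kappa> c + 1) (leg \<kappa> c) / brk q t (arm \<rho> c + 1) (leg \<rho> c)) *
     (\<Prod>c\<in>Cset \<rho> \<kappa>. brk q t (arm \<kappa> c) (leg \<kappa> c + 1) / brk q t (arm \<rho> c) (leg \<rho> c + 1))"

definition beta :: "'a::field \<Rightarrow> 'a \<Rightarrow> diagram \<Rightarrow> diagram \<Rightarrow> 'a" where
  "beta q t \<rho> \<kappa> = 1 / alpha q t \<rho> \<kappa>"
definition beta_bar :: "'a::field \<Rightarrow> 'a \<Rightarrow> diagram \<Rightarrow> diagram \<Rightarrow> 'a" where
  "beta_bar q t \<rho> \<kappa> = 1 / alpha_bar q t \<rho> \<kappa>"

definition gamma :: "'a::field \<Rightarrow> 'a \<Rightarrow> diagram \<Rightarrow> diagram \<Rightarrow> diagram \<Rightarrow> 'a" where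
  "gamma q t lam \<mu> \<nu> =
     (let A = n'_skew lam \<mu> - n'_skew \<nu> lam; B = n_skew \<nu> lam - n_skew lam \<mu>
      in (1 - q powi A * t powi B) * (1 - q powi (A + 1) * t powi (B - 1)) / ((1 - q) * (1 - t)))"

text \<open>P_lambda(mu -> nu), for mu in D*(lambda) and nu in U(lambda)\<close>
definition locP :: "'a::field \<Rightarrow> 'a \<Rightarrow> diagram \<Rightarrow> diagram \<Rightarrow> diagram \<Rightarrow> 'a" where
  "locP q t lam \<mu> \<nu> =
     (if \<mu> = lam then t powi (n_skew \<nu> lam) * alpha q t \<nu> lam
      else t powi (n_skew \<nu> lam - n_skew lam \<mu> - 1) * alpha q t \<nu> lam * beta q t lam \<mu>
             / gamma q t lam \<mu> \<nu>)"

definition locPbar :: "'a::field \<Rightarrow> 'a \<Rightarrow> diagram \<Rightarrow> diagram \<Rightarrow> diagram \<Rightarrow> 'a" where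
  "locPbar q t lam \<mu> \<nu> =
     (if \<mu> = lam then t powi (n_skew \<nu> lam) * alpha_bar q t \<nu> lam
      else t powi (n_skew \<nu> lam - n_skew lam \<mu> - 1) * alpha_bar q t \<nu> lam * beta_bar q t lam \<mu>
             / gamma q t lam \<mu> \<nu>)"

text \<open>Lambda i j is the label of vertex (i,j), 0 <= i,j <= n (matrix coordinates).
  Square (i,j), 1 <= i,j <= n, contains a 1 iff i = sigma j.\<close>
definition is_growth :: "nat \<Rightarrow> (nat \<Rightarrow> nat) \<Rightarrow> (nat \<Rightarrow> nat \<Rightarrow> diagram) \<Rightarrow> bool" where
  "is_growth n \<sigma> \<Lambda> \<longleftrightarrow>
     (\<forall>i\<le>n. \<forall>j\<le>n. is_partition (\<Lambda> i j)) \<and>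
     (\<forall>i\<le>n. \<forall>j<n. \<Lambda> i j \<subseteq> \<Lambda> i (j + 1)) \<and>
     (\<forall>i<n. \<forall>j\<le>n. \<Lambda> i j \<subseteq> \<Lambda> (i + 1) j) \<and>
     (\<forall>i\<le>n. \<forall>j\<le>n. card (\<Lambda> i j) =
        card {(i', j'). 1 \<le> i' \<and> i' \<le> i \<and> 1 \<le> j' \<and> j' \<le> j \<and> i' = \<sigma> j'})"

definition P_tab :: "nat \<Rightarrow> (nat \<Rightarrow> nat \<Rightarrow> diagram) \<Rightarrow> cell \<Rightarrow> nat" where
  "P_tab n \<Lambda> c = (THE i. 1 \<le> i \<and> i \<le> n \<and> c \<in> \<Lambda> i n - \<Lambda> (i - 1) n)"
definition Q_tab :: "nat \<Rightarrow> (nat \<Rightarrow> nat \<Rightarrow> diagram) \<Rightarrow> cell \<Rightarrow> nat" where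
  "Q_tab n \<Lambda> c = (THE i. 1 \<le> i \<and> i \<le> n \<and> c \<in> \<Lambda> n i - \<Lambda> n (i - 1))"

text \<open>Square (i,j): NW = (i-1,j-1), NE = (i-1,j), SW = (i,j-1), SE = (i,j).\<close>
definition type_III :: "(nat \<Rightarrow> nat \<Rightarrow> diagram) \<Rightarrow> nat \<Rightarrow> nat \<Rightarrow> bool" where
  "type_III \<Lambda> i j \<longleftrightarrow> \<Lambda> (i - 1) j = \<Lambda> i (j - 1) \<and>
     \<Lambda> (i - 1) (j - 1) \<in> Dns_star (\<Lambda> (i - 1) j) \<and> \<Lambda> i j \<in> Ups (\<Lambda> (i - 1) j)"

definition sqP :: "'a::field \<Rightarrow> 'a \<Rightarrow> (nat \<Rightarrow> nat \<Rightarrow> diagram) \<Rightarrow> nat \<Rightarrow> nat \<Rightarrow> 'a" where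
  "sqP q t \<Lambda> i j = (if type_III \<Lambda> i j
      then locP q t (\<Lambda> (i - 1) j) (\<Lambda> (i - 1) (j - 1)) (\<Lambda> i j) else 1)"
definition sqPbar :: "'a::field \<Rightarrow> 'a \<Rightarrow> (nat \<Rightarrow> nat \<Rightarrow> diagram) \<Rightarrow> nat \<Rightarrow> nat \<Rightarrow> 'a" where
  "sqPbar q t \<Lambda> i j = (if type_III \<Lambda> i j
      then locPbar q t (\<Lambda> (i - 1) j) (\<Lambda> (i - 1) (j - 1)) (\<Lambda> i j) else 1)"

definition growthP :: "'a::field \<Rightarrow> 'a \<Rightarrow> nat \<Rightarrow> (nat \<Rightarrow> nat \<Rightarrow> diagram) \<Rightarrow> 'a" where
  "growthP q t n \<Lambda> = (\<Prod>i\<in>{1..n}. \<Prod>j\<in>{1..n}. sqP q t \<Lambda> i j)"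
definition growthPbar :: "'a::field \<Rightarrow> 'a \<Rightarrow> nat \<Rightarrow> (nat \<Rightarrow> nat \<Rightarrow> diagram) \<Rightarrow> 'a" where
  "growthPbar q t n \<Lambda> = (\<Prod>i\<in>{1..n}. \<Prod>j\<in>{1..n}. sqPbar q t \<Lambda> i j)"

end

theory Submission
  imports Defs
begin


definition qt_ok :: "'a::field \<Rightarrow> 'a \<Rightarrow> bool" where
  "qt_ok q t \<longleftrightarrow> (\<forall>i j. 0 < i + j \<longrightarrow> q ^ i * t ^ j \<noteq> 1)"

lemma Fract_pow1: "(Fract (p::'a::idom) 1) ^ k = Fract (p ^ k) 1"
  by (induction k) (simp_all add: One_fract_def)

lemma qt_ok_ind: "qt_ok q_ind t_ind"
  unfolding qt_ok_def
proof (intro allI impI)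
  fix i j :: nat assume ij: "0 < i + j"
  have e: "q_ind ^ i * t_ind ^ j = Fract ([:[:0, 1:]:] ^ i * [:0, 1:] ^ j) 1"
    by (simp add: q_ind_def t_ind_def Fract_pow1)
  have p: "[:[:0, 1:]:] ^ i * [:0, 1:] ^ j = (monom (monom (1::int) i) j)"
  proof -
    have 1: "[:[:0, 1:]:] ^ i = monom ([:0, 1:] ^ i) 0" by (simp add: monom_power flip: monom_0)
    have 2: "([:0, 1:] :: int poly poly) ^ j = monom 1 j" by (simp add: monom_altdef)
    have 3: "([:0, 1:] :: int poly) ^ i = monom 1 i" by (simp add: monom_altdef)
    show ?thesis unfolding 1 2 3 by (simp add: mult_monom)
  qed
  show "q_ind ^ i * t_ind ^ j \<noteq> 1"
  proof
    assume "q_ind ^ i * t_ind ^ j = 1"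
    hence "Fract (monom (monom (1::int) i) j) 1 = Fract 1 1" using e p by (simp add: One_fract_def)
    hence "monom (monom (1::int) i) j = 1" by (simp add: eq_fract)
    hence "coeff (coeff (monom (monom (1::int) i) j) 0) 0 = coeff (coeff 1 0) 0" by simp
    thus False using ij by (simp add: coeff_monom split: if_splits)
  qed
qed

lemma brk_nz: "qt_ok q t \<Longrightarrow> 0 < i + j \<Longrightarrow> brk q t i j \<noteq> 0"
  unfolding qt_ok_def brk_def by auto

lemma brk_nz1: "qt_ok q t \<Longrightarrow> brk q t i (Suc j) \<noteq> 0"
  by (rule brk_nz) auto
lemma brk_nz2: "qt_ok q t \<Longrightarrow> brk q t (Suc i) j \<noteq> 0"
  by (rule brk_nz) auto

lemma bij_nz: "qt_ok q t \<Longrightarrow> bij_wt q t i j \<noteq> 0"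
  unfolding bij_wt_def by (simp add: brk_nz1 brk_nz2)

lemma b_cell_nz: "qt_ok q t \<Longrightarrow> b_cell q t S c \<noteq> 0"
  unfolding b_cell_def by (rule bij_nz)

lemma prod_nz: "(\<And>x. x \<in> A \<Longrightarrow> f x \<noteq> (0::'a::field)) \<Longrightarrow> prod f A \<noteq> 0"
  by (cases "finite A") auto

definition phiP :: "'a::field \<Rightarrow> 'a \<Rightarrow> diagram \<Rightarrow> diagram \<Rightarrow> 'a" where
  "phiP q t \<rho> \<kappa> = (\<Prod>c\<in>Cset \<rho> \<kappa>. b_cell q t \<rho> c / b_cell q t \<kappa> c)"

lemma psi_nz: "qt_ok q t \<Longrightarrow> psi_skew q t \<rho> \<kappa> \<noteq> 0"
  unfolding psi_skew_def by (rule prod_nz) (simp add: b_cell_nz)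

lemma phiP_nz: "qt_ok q t \<Longrightarrow> phiP q t \<rho> \<kappa> \<noteq> 0"
  unfolding phiP_def by (rule prod_nz) (simp add: b_cell_nz)

lemma psi_same: "psi_skew q t \<rho> \<rho> = 1"
  unfolding psi_skew_def Rset_def by simp
lemma phiP_same: "phiP q t \<rho> \<rho> = 1"
  unfolding phiP_def Cset_def by simp

lemma phi_skew_eq: "phi_skew q t \<rho> \<kappa> = (1 - t) / (1 - q) * phiP q t \<rho> \<kappa>"
  unfolding phi_skew_def phiP_def ..

lemma alpha_eq:
  assumes ok: "qt_ok q t"
  shows "alpha q t \<rho> \<kappa> = alpha_bar q t \<rho> \<kappa> * psi_skew q t \<rho> \<kappa> * phiP q t \<rho> \<kappa>"
proof -
  have R: "brk q t (arm \<kappa> c) (leg \<kappa> c + 1) / brk q t (arm \<rho> c) (leg \<rho> c + 1) =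
      brk q t (arm \<kappa> c + 1) (leg \<kappa> c) / brk q t (arm \<rho> c + 1) (leg \<rho> c) *
      (b_cell q t \<kappa> c / b_cell q t \<rho> c)" for c
    unfolding b_cell_def bij_wt_def using brk_nz1[OF ok] brk_nz2[OF ok] by (simp add: divide_simps)
  have C: "brk q t (arm \<kappa> c + 1) (leg \<kappa> c) / brk q t (arm \<rho> c + 1) (leg \<rho> c) =
      brk q t (arm \<kappa> c) (leg \<kappa> c + 1) / brk q t (arm \<rho> c) (leg \<rho> c + 1) *
      (b_cell q t \<rho> c / b_cell q t \<kappa> c)" for c
    unfolding b_cell_def bij_wt_def using brk_nz1[OF ok] brk_nz2[OF ok] by (simp add: divide_simps)
  have "alpha q t \<rho> \<kappa> = (\<Prod>c\<in>Rset \<rho> \<kappa>. brk q t (arm \<kappa> c + 1) (leg \<kappa> c) / brk q t (arm \<rho> c + 1) (leg \<rho> c) *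
      (b_cell q t \<kappa> c / b_cell q t \<rho> c)) * (\<Prod>c\<in>Cset \<rho> \<kappa>. brk q t (arm \<kappa> c) (leg \<kappa> c + 1) / brk q t (arm \<rho> c) (leg \<rho> c + 1) *
      (b_cell q t \<rho> c / b_cell q t \<kappa> c))"
    unfolding alpha_def by (intro arg_cong2[where f="(*)"] prod.cong refl R C)
  also have "\<dots> = alpha_bar q t \<rho> \<kappa> * psi_skew q t \<rho> \<kappa> * phiP q t \<rho> \<kappa>"
    unfolding alpha_bar_def psi_skew_def phiP_def prod.distrib by (simp only: ac_simps)
  finally show ?thesis .
qed



lemma part_finite: "is_partition S \<Longrightarrow> finite S"
  unfolding is_partition_def by blast

lemma part_down: "is_partition S \<Longrightarrow> (x, y) \<in> S \<Longrightarrow> 1 \<le> x' \<Longrightarrow> x' \<le> x \<Longrightarrow> 1 \<le> y' \<Longrightarrow> y' \<le> y \<Longrightarrow> (x', y') \<in> S"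
  unfolding is_partition_def by blast

lemma part_pos: "is_partition S \<Longrightarrow> (x, y) \<in> S \<Longrightarrow> 1 \<le> x \<and> 1 \<le> y"
  unfolding is_partition_def by blast

lemma fin_row: "finite S \<Longrightarrow> finite {x. (x, r) \<in> S}"
  by (rule finite_subset[of _ "fst ` S"]) force+
lemma fin_col: "finite S \<Longrightarrow> finite {y. (x, y) \<in> S}"
  by (rule finite_subset[of _ "snd ` S"]) force+

lemma row_len_insert:
  assumes "finite S" "p \<notin> S"
  shows "row_len (insert p S) r = row_len S r + (if snd p = r then 1 else 0)"
proof (cases "snd p = r")
  case True
  have "{x. (x, r) \<in> insert p S} = insert (fst p) {x. (x, r) \<in> S}" using True by (cases p) auto
  moreover have "fst p \<notin> {x. (x, r) \<in> S}" using True assms(2) by (cases p) auto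
  ultimately show ?thesis using True fin_row[OF assms(1)] unfolding row_len_def by simp
next
  case False
  have "{x. (x, r) \<in> insert p S} = {x. (x, r) \<in> S}" using False by (cases p) auto
  thus ?thesis using False unfolding row_len_def by simp
qed

lemma col_len_insert:
  assumes "finite S" "p \<notin> S"
  shows "col_len (insert p S) r = col_len S r + (if fst p = r then 1 else 0)"
proof (cases "fst p = r")
  case True
  have "{y. (r, y) \<in> insert p S} = insert (snd p) {y. (r, y) \<in> S}" using True by (cases p) auto
  moreover have "snd p \<notin> {y. (r, y) \<in> S}" using True assms(2) by (cases p) auto
  ultimately show ?thesis using True fin_col[OF assms(1)] unfolding col_len_def by simp
next
  case False
  have "{y. (r, y) \<in> insert p S} = {y. (r, y) \<in> S}" using False by (cases p) auto
  thus ?thesis using False unfolding col_len_def by simp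
qed

lemma row_bound: "is_partition S \<Longrightarrow> c \<in> S \<Longrightarrow> fst c \<le> row_len S (snd c)"
proof -
  assume P: "is_partition S" and c: "c \<in> S"
  obtain x y where xy: "c = (x, y)" by (cases c)
  have "{1..x} \<subseteq> {x'. (x', y) \<in> S}" using part_down[OF P, of x y] c xy part_pos[OF P, of x y] by auto
  hence "card {1..x} \<le> row_len S y" unfolding row_len_def
    by (rule card_mono[OF fin_row[OF part_finite[OF P]]])
  thus ?thesis using xy by simp
qed

lemma col_bound: "is_partition S \<Longrightarrow> c \<in> S \<Longrightarrow> snd c \<le> col_len S (fst c)"
proof -
  assume P: "is_partition S" and c: "c \<in> S"
  obtain x y where xy: "c = (x, y)" by (cases c)
  have "{1..y} \<subseteq> {y'. (x, y') \<in> S}" using part_down[OF P, of x y] c xy part_pos[OF P, of x y] by auto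
  hence "card {1..y} \<le> col_len S x" unfolding col_len_def
    by (rule card_mono[OF fin_col[OF part_finite[OF P]]])
  thus ?thesis using xy by simp
qed

lemma arm_insert: "is_partition S \<Longrightarrow> p \<notin> S \<Longrightarrow> c \<in> S \<Longrightarrow>
   arm (insert p S) c = arm S c + (if snd p = snd c then 1 else 0)"
  unfolding arm_def using row_len_insert[OF part_finite, of S p "snd c"] row_bound[of S c] by auto

lemma leg_insert: "is_partition S \<Longrightarrow> p \<notin> S \<Longrightarrow> c \<in> S \<Longrightarrow>
   leg (insert p S) c = leg S c + (if fst p = fst c then 1 else 0)"
  unfolding leg_def using col_len_insert[OF part_finite, of S p "fst c"] col_bound[of S c] by auto

lemma addable_row0:
  assumes px: "is_partition (insert (x1, r) a)" and py: "is_partition (insert (y1, r) a)"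
    and "(x1, r) \<notin> a" "(y1, r) \<notin> a" "x1 < y1"
  shows False
proof -
  have "x1 \<ge> 1" "r \<ge> 1" using part_pos[OF px, of x1 r] by auto
  hence "(x1, r) \<in> insert (y1, r) a" using part_down[OF py, of y1 r x1 r] assms(5) by auto
  thus False using assms by auto
qed

lemma addable_row:
  assumes px: "is_partition (insert x a)" and py: "is_partition (insert y a)"
    and "x \<notin> a" "y \<notin> a" "snd x = snd y"
  shows "x = y"
proof -
  obtain x1 r y1 where x: "x = (x1, r)" and y: "y = (y1, r)" using assms(5) by (cases x, cases y) auto
  have "\<not> x1 < y1" using addable_row0[of x1 r a y1] assms x y by auto
  moreover have "\<not> y1 < x1" using addable_row0[of y1 r a x1] assms x y by auto
  ultimately show ?thesis using x y by auto
qed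

lemma addable_col0:
  assumes px: "is_partition (insert (r, x1) a)" and py: "is_partition (insert (r, y1) a)"
    and "(r, x1) \<notin> a" "(r, y1) \<notin> a" "x1 < y1"
  shows False
proof -
  have "x1 \<ge> 1" "r \<ge> 1" using part_pos[OF px, of r x1] by auto
  hence "(r, x1) \<in> insert (r, y1) a" using part_down[OF py, of r y1 r x1] assms(5) by auto
  thus False using assms by auto
qed

lemma addable_col:
  assumes px: "is_partition (insert x a)" and py: "is_partition (insert y a)"
    and "x \<notin> a" "y \<notin> a" "fst x = fst y"
  shows "x = y"
proof -
  obtain x1 r y1 where x: "x = (r, x1)" and y: "y = (r, y1)" using assms(5) by (cases x, cases y) auto
  have "\<not> x1 < y1" using addable_col0[of r x1 a y1] assms x y by auto
  moreover have "\<not> y1 < x1" using addable_col0[of r y1 a x1] assms x y by auto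
  ultimately show ?thesis using x y by auto
qed



lemma fld_aux: "(Y::'a::field) \<noteq> 0 \<Longrightarrow> W \<noteq> 0 \<Longrightarrow> X / Y * (Y / Z) = W / Z * (X / W)"
  by (simp add: divide_simps)

lemma comb:
  assumes ok: "qt_ok q t" and pa: "is_partition a" and pb: "is_partition (insert x a)"
    and pc: "is_partition (insert y a)" and xa: "x \<notin> a" and ya: "y \<notin> a" and xy: "x \<noteq> y"
  shows "psi_skew q t (insert x (insert y a)) (insert x a) * phiP q t (insert x (insert y a)) (insert y a)
       = psi_skew q t (insert y a) a * phiP q t (insert x a) a"
proof -
  define b where "b = insert x a"
  define c where "c = insert y a"
  define d where "d = insert x (insert y a)"
  have d2: "d = insert y b" unfolding d_def b_def by auto
  have r: "snd x \<noteq> snd y" using addable_row[OF pb pc xa ya] xy by auto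
  have cl: "fst x \<noteq> fst y" using addable_col[OF pb pc xa ya] xy by auto
  define Ra where "Ra = {c'\<in>a. snd c' = snd y}"
  define Ca where "Ca = {c'\<in>a. fst c' = fst x}"
  have R1: "Rset d b = Ra" unfolding Rset_def Ra_def d2 b_def using r xa ya xy by (cases x, cases y) auto
  have R2: "Rset c a = Ra" unfolding Rset_def Ra_def c_def using ya by (cases y) auto
  have C1: "Cset d c = Ca" unfolding Cset_def Ca_def d_def c_def using cl xa ya xy by (cases x, cases y) auto
  have C2: "Cset b a = Ca" unfolding Cset_def Ca_def b_def using xa by (cases x) auto
  have yc: "x \<notin> c" unfolding c_def using xa xy by auto
  have armb: "arm b c' = arm a c' + (if snd x = snd c' then 1 else 0)"
   and legb: "leg b c' = leg a c' + (if fst x = fst c' then 1 else 0)"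
   and armc: "arm c c' = arm a c' + (if snd y = snd c' then 1 else 0)"
   and legc: "leg c c' = leg a c' + (if fst y = fst c' then 1 else 0)"
   and armd: "arm d c' = arm c c' + (if snd x = snd c' then 1 else 0)"
   and legd: "leg d c' = leg c c' + (if fst x = fst c' then 1 else 0)"
   if "c' \<in> a" for c'
    using that arm_insert[OF pa xa] leg_insert[OF pa xa] arm_insert[OF pa ya] leg_insert[OF pa ya]
      arm_insert[OF pc[folded c_def] yc, of c'] leg_insert[OF pc[folded c_def] yc, of c']
    unfolding b_def c_def d_def by auto
  define z where "z = (fst x, snd y)"
  define A where "A = arm a"
  define L where "L = leg a"
  have zR: "c' \<in> Ra \<Longrightarrow> fst x = fst c' \<longleftrightarrow> c' = z" for c' unfolding Ra_def z_def by (cases c') auto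
  have zC: "c' \<in> Ca \<Longrightarrow> snd y = snd c' \<longleftrightarrow> c' = z" for c' unfolding Ca_def z_def by (cases c') auto
  have Rsub: "Ra \<subseteq> a" "Ca \<subseteq> a" unfolding Ra_def Ca_def by auto
  have yR: "c' \<in> Ra \<Longrightarrow> fst y \<noteq> fst c'" for c' unfolding Ra_def using ya by (cases c', cases y) auto
  have xC: "c' \<in> Ca \<Longrightarrow> snd x \<noteq> snd c'" for c' unfolding Ca_def using xa by (cases c', cases x) auto
  have rR: "c' \<in> Ra \<Longrightarrow> snd x \<noteq> snd c'" "c' \<in> Ra \<Longrightarrow> snd y = snd c'" for c' unfolding Ra_def using r by auto
  have cC: "c' \<in> Ca \<Longrightarrow> fst y \<noteq> fst c'" "c' \<in> Ca \<Longrightarrow> fst x = fst c'" for c' unfolding Ca_def using cl by auto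
  define g1 where "g1 c' = b_cell q t b c' / b_cell q t d c'" for c'
  define g2 where "g2 c' = b_cell q t a c' / b_cell q t c c'" for c'
  define h1 where "h1 c' = b_cell q t d c' / b_cell q t c c'" for c'
  define h2 where "h2 c' = b_cell q t b c' / b_cell q t a c'" for c'
  have g1e: "g1 c' = bij_wt q t (A c') (L c' + (if c' = z then 1 else 0)) / bij_wt q t (A c' + 1) (L c' + (if c' = z then 1 else 0))"
    if "c' \<in> Ra" for c'
  proof -
    have ca: "c' \<in> a" using that Rsub by auto
    show ?thesis using that armb[OF ca] legb[OF ca] armc[OF ca] legc[OF ca] armd[OF ca] legd[OF ca] yR[OF that] zR[OF that] rR[OF that] unfolding g1_def b_cell_def A_def L_def by simp
  qed
  have g2e: "g2 c' = bij_wt q t (A c') (L c') / bij_wt q t (A c' + 1) (L c')"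
    if "c' \<in> Ra" for c'
  proof -
    have ca: "c' \<in> a" using that Rsub by auto
    show ?thesis using that armb[OF ca] legb[OF ca] armc[OF ca] legc[OF ca] armd[OF ca] legd[OF ca] yR[OF that] zR[OF that] rR[OF that] unfolding g2_def b_cell_def A_def L_def by simp
  qed
  have h1e: "h1 c' = bij_wt q t (A c' + (if c' = z then 1 else 0)) (L c' + 1) / bij_wt q t (A c' + (if c' = z then 1 else 0)) (L c')"
    if "c' \<in> Ca" for c'
  proof -
    have ca: "c' \<in> a" using that Rsub by auto
    show ?thesis using that armb[OF ca] legb[OF ca] armc[OF ca] legc[OF ca] armd[OF ca] legd[OF ca] xC[OF that] zC[OF that] cC[OF that] unfolding h1_def b_cell_def A_def L_def by simp
  qed
  have h2e: "h2 c' = bij_wt q t (A c') (L c' + 1) / bij_wt q t (A c') (L c')"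
    if "c' \<in> Ca" for c'
  proof -
    have ca: "c' \<in> a" using that Rsub by auto
    show ?thesis using that armb[OF ca] legb[OF ca] armc[OF ca] legc[OF ca] armd[OF ca] legd[OF ca] xC[OF that] zC[OF that] cC[OF that] unfolding h2_def b_cell_def A_def L_def by simp
  qed
  have gg: "c' \<in> Ra \<Longrightarrow> c' \<noteq> z \<Longrightarrow> g1 c' = g2 c'" for c' using g1e g2e by simp
  have hh: "c' \<in> Ca \<Longrightarrow> c' \<noteq> z \<Longrightarrow> h1 c' = h2 c'" for c' using h1e h2e by simp
  have LHS: "psi_skew q t d b * phiP q t d c = prod g1 Ra * prod h1 Ca"
    unfolding psi_skew_def phiP_def R1 C1 g1_def h1_def ..
  have RHS: "psi_skew q t c a * phiP q t b a = prod g2 Ra * prod h2 Ca"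
    unfolding psi_skew_def phiP_def R2 C2 g2_def h2_def ..
  have fin: "finite Ra" "finite Ca" using Rsub part_finite[OF pa] finite_subset by auto
  have "prod g1 Ra * prod h1 Ca = prod g2 Ra * prod h2 Ca"
  proof (cases "z \<in> a")
    case False
    hence "z \<notin> Ra" "z \<notin> Ca" using Rsub by auto
    hence "prod g1 Ra = prod g2 Ra" "prod h1 Ca = prod h2 Ca"
      using gg hh by (auto intro!: prod.cong)
    thus ?thesis by simp
  next
    case True
    hence zin: "z \<in> Ra" "z \<in> Ca" unfolding Ra_def Ca_def z_def by auto
    have e1: "prod g1 Ra = g1 z * prod g1 (Ra - {z})" "prod g2 Ra = g2 z * prod g2 (Ra - {z})"
      "prod h1 Ca = h1 z * prod h1 (Ca - {z})" "prod h2 Ca = h2 z * prod h2 (Ca - {z})"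
      using prod.remove[OF fin(1) zin(1)] prod.remove[OF fin(2) zin(2)] by auto
    have e2: "prod g1 (Ra - {z}) = prod g2 (Ra - {z})" "prod h1 (Ca - {z}) = prod h2 (Ca - {z})"
      using gg hh by (auto intro!: prod.cong)
    have e3: "g1 z * h1 z = g2 z * h2 z"
    proof -
      have n1: "bij_wt q t (A z + 1) (L z + 1) \<noteq> 0" "bij_wt q t (A z) (L z) \<noteq> 0"
        "bij_wt q t (A z + 1) (L z) \<noteq> 0" using bij_nz[OF ok] by auto
      have "g1 z * h1 z = bij_wt q t (A z) (L z + 1) / bij_wt q t (A z + 1) (L z + 1) *
          (bij_wt q t (A z + 1) (L z + 1) / bij_wt q t (A z + 1) (L z))"
        using g1e[OF zin(1)] h1e[OF zin(2)] by simp
      also have "\<dots> = bij_wt q t (A z) (L z) / bij_wt q t (A z + 1) (L z) *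
          (bij_wt q t (A z) (L z + 1) / bij_wt q t (A z) (L z))"
        by (rule fld_aux) (use n1 in auto)
      also have "\<dots> = g2 z * h2 z"
        using g2e[OF zin(1)] h2e[OF zin(2)] by simp
      finally show ?thesis .
    qed
    have re: "(u::'a) * X * (v * Y) = (u * v) * (X * Y)" for u v X Y by (simp only: ac_simps)
    show ?thesis unfolding e1 e2 re e3 ..
  qed
  thus ?thesis using LHS RHS unfolding b_def c_def d_def by simp
qed



lemma fa2: "(Pa::'a::field) \<noteq> 0 \<Longrightarrow> T * (X * Pd) * (1 / (Y * Pa)) / G * Pa = T * X * (1 / Y) / G * Pd"
  by (cases "Y = 0"; cases "G = 0") (simp_all add: field_simps)

lemma covers_intro: "is_partition a \<Longrightarrow> is_partition b \<Longrightarrow> a \<subseteq> b \<Longrightarrow> card b = card a + 1 \<Longrightarrow> covers a b"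
  unfolding covers_def using card_Diff_subset[of a b] part_finite[of a] by auto

lemma square:
  assumes ok: "qt_ok q t"
    and pa: "is_partition a" and pb: "is_partition b" and pc: "is_partition c" and pd: "is_partition d"
    and ab: "a \<subseteq> b" and ac: "a \<subseteq> c" and bd: "b \<subseteq> d" and cd: "c \<subseteq> d"
    and cb: "card b \<le> card a + 1" and cc: "card c \<le> card a + 1"
    and cs: "(card b = card a \<and> card c = card a \<and> card d = card a + 1) \<or> card d + card a = card b + card c"
  shows "(if b = c \<and> a \<in> Dns_star b \<and> d \<in> Ups b then locP q t b a d else 1) * (psi_skew q t c a * phiP q t b a)
       = (if b = c \<and> a \<in> Dns_star b \<and> d \<in> Ups b then locPbar q t b a d else 1) * (psi_skew q t d b * phiP q t d c)"
proof (cases "b = c \<and> a \<in> Dns_star b \<and> d \<in> Ups b")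
  case True
  hence bc: "b = c" and aD: "a = b \<or> covers a b" unfolding Dns_star_def Dns_def by auto
  show ?thesis
  proof (cases "a = b")
    case True
    have cond: "b = c \<and> a \<in> Dns_star b \<and> d \<in> Ups b" by fact
    show ?thesis unfolding if_P[OF cond] using True bc alpha_eq[OF ok, of d b]
      by (simp add: locP_def locPbar_def psi_same phiP_same)
  next
    case False
    have nz: "psi_skew q t b a * phiP q t b a \<noteq> 0" using psi_nz[OF ok] phiP_nz[OF ok] by simp
    have "locP q t b a d * (psi_skew q t b a * phiP q t b a) =
       t powi (n_skew d b - n_skew b a - 1) * (alpha_bar q t d b * (psi_skew q t d b * phiP q t d b)) *
       (1 / (alpha_bar q t b a * (psi_skew q t b a * phiP q t b a))) / gamma q t b a d * (psi_skew q t b a * phiP q t b a)"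
      using False unfolding locP_def beta_def alpha_eq[OF ok] by (simp add: ac_simps)
    also have "\<dots> = t powi (n_skew d b - n_skew b a - 1) * alpha_bar q t d b * (1 / alpha_bar q t b a) / gamma q t b a d
        * (psi_skew q t d b * phiP q t d b)"
      by (rule fa2[OF nz])
    also have "\<dots> = locPbar q t b a d * (psi_skew q t d b * phiP q t d b)"
      using False unfolding locPbar_def beta_bar_def by simp
    finally show ?thesis using True bc by simp
  qed
next
  case False
  have fa: "finite a" and fb: "finite b" and fc: "finite c" and fd: "finite d"
    using pa pb pc pd part_finite by auto
  have cab: "card a \<le> card b" "card a \<le> card c" "card b \<le> card d" "card c \<le> card d"
    by (simp_all add: card_mono ab ac bd cd fb fc fd)
  consider "card b = card a" | "card c = card a" | "card b = card a + 1" "card c = card a + 1"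
    using cb cc cab by linarith
  thus ?thesis
  proof cases
    case 1
    hence ba: "b = a" using card_subset_eq[OF fb ab] by simp
    have "\<not> (card b = card a \<and> card c = card a \<and> card d = card a + 1)"
    proof
      assume h: "card b = card a \<and> card c = card a \<and> card d = card a + 1"
      hence "c = a" using card_subset_eq[OF fc ac] by simp
      moreover have "covers b d" using covers_intro[OF pb pd bd] h by simp
      ultimately show False using False ba unfolding Dns_star_def Ups_def by simp
    qed
    hence "card d = card c" using cs 1 by auto
    hence "d = c" using card_subset_eq[OF fd cd] by simp
    thus ?thesis unfolding if_not_P[OF False] using ba by (simp add: phiP_same)
  next
    case 2
    hence ca: "c = a" using card_subset_eq[OF fc ac] by simp
    have "\<not> (card b = card a \<and> card c = card a \<and> card d = card a + 1)"
    proof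
      assume h: "card b = card a \<and> card c = card a \<and> card d = card a + 1"
      hence "b = a" using card_subset_eq[OF fb ab] by simp
      moreover have "covers b d" using covers_intro[OF pb pd bd] h by simp
      ultimately show False using False ca unfolding Dns_star_def Ups_def by simp
    qed
    hence "card d = card b" using cs 2 by auto
    hence "d = b" using card_subset_eq[OF fd bd] by simp
    thus ?thesis unfolding if_not_P[OF False] using ca by (simp add: psi_same)
  next
    case 3
    have cdd: "card d = card a + 2" using cs 3 by auto
    have "card (b - a) = 1" using card_Diff_subset[OF finite_subset[OF ab fb] ab] 3 by simp
    then obtain x where x: "b - a = {x}" by (rule card_1_singletonE)
    have "card (c - a) = 1" using card_Diff_subset[OF finite_subset[OF ac fc] ac] 3 by simp
    then obtain y where y: "c - a = {y}" by (rule card_1_singletonE)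
    have bx: "b = insert x a" "x \<notin> a" using x ab by auto
    have cy: "c = insert y a" "y \<notin> a" using y ac by auto
    have xy: "x \<noteq> y"
    proof
      assume "x = y"
      hence "b = c" using bx cy by simp
      moreover have "covers a b" using covers_intro[OF pa pb ab] 3 by simp
      moreover have "covers b d" using covers_intro[OF pb pd bd] 3 cdd by simp
      ultimately show False using False unfolding Dns_star_def Dns_def Ups_def by simp
    qed
    have "insert x (insert y a) \<subseteq> d" using bd cd bx cy by auto
    moreover have "card (insert x (insert y a)) = card d" using cdd bx cy xy fa by simp
    ultimately have dxy: "d = insert x (insert y a)" using card_subset_eq[OF fd] by metis
    show ?thesis unfolding if_not_P[OF False] using comb[OF ok pa, of x y] pb pc bx cy xy dxy by simp
  qed
qed



lemma prod_tele: fixes n :: nat shows "(\<Prod>j\<in>{1..n}. f (j - 1)) * f n = f 0 * (\<Prod>j\<in>{1..n}. (f j :: 'a::comm_monoid_mult))"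
proof (induction n)
  case 0 thus ?case by simp
next
  case (Suc n)
  have "(\<Prod>j\<in>{1..Suc n}. f (j - 1)) * f (Suc n) = ((\<Prod>j\<in>{1..n}. f (j - 1)) * f n) * f (Suc n)"
    by (simp add: ac_simps)
  also have "\<dots> = f 0 * (\<Prod>j\<in>{1..Suc n}. f j)" unfolding Suc by (simp add: ac_simps)
  finally show ?case .
qed

lemma telescope:
  fixes s s' V H :: "nat \<Rightarrow> nat \<Rightarrow> 'a::field"
  assumes sq: "\<And>i j. i \<in> {1..n} \<Longrightarrow> j \<in> {1..n} \<Longrightarrow> s i j * (V i (j - 1) * H (i - 1) j) = s' i j * (V i j * H i j)"
    and V0: "\<And>i. i \<in> {1..n} \<Longrightarrow> V i 0 = 1" and H0: "\<And>j. j \<in> {1..n} \<Longrightarrow> H 0 j = 1"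
    and Vnz: "\<And>i j. V i j \<noteq> 0" and Hnz: "\<And>i j. H i j \<noteq> 0"
  shows "(\<Prod>i\<in>{1..n}. \<Prod>j\<in>{1..n}. s i j) = (\<Prod>i\<in>{1..n}. \<Prod>j\<in>{1..n}. s' i j) * (\<Prod>i\<in>{1..n}. V i n) * (\<Prod>j\<in>{1..n}. H n j)"
proof -
  define S where "S = (\<Prod>i\<in>{1..n}. \<Prod>j\<in>{1..n}. s i j)"
  define S' where "S' = (\<Prod>i\<in>{1..n}. \<Prod>j\<in>{1..n}. s' i j)"
  define PV1 where "PV1 = (\<Prod>i\<in>{1..n}. \<Prod>j\<in>{1..n}. V i (j - 1))"
  define PV2 where "PV2 = (\<Prod>i\<in>{1..n}. \<Prod>j\<in>{1..n}. V i j)"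
  define PH1 where "PH1 = (\<Prod>i\<in>{1..n}. \<Prod>j\<in>{1..n}. H (i - 1) j)"
  define PH2 where "PH2 = (\<Prod>i\<in>{1..n}. \<Prod>j\<in>{1..n}. H i j)"
  define VN where "VN = (\<Prod>i\<in>{1..n}. V i n)"
  define HN where "HN = (\<Prod>j\<in>{1..n}. H n j)"
  have "S * (PV1 * PH1) = (\<Prod>i\<in>{1..n}. \<Prod>j\<in>{1..n}. s i j * (V i (j - 1) * H (i - 1) j))"
    unfolding S_def PV1_def PH1_def prod.distrib ..
  also have "\<dots> = (\<Prod>i\<in>{1..n}. \<Prod>j\<in>{1..n}. s' i j * (V i j * H i j))"
    using sq by (intro prod.cong refl) auto
  also have "\<dots> = S' * (PV2 * PH2)"
    unfolding S'_def PV2_def PH2_def prod.distrib ..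
  finally have e: "S * (PV1 * PH1) = S' * (PV2 * PH2)" .
  have v: "PV1 * VN = PV2"
    unfolding PV1_def VN_def PV2_def prod.distrib[symmetric] prod_tele using V0 by (intro prod.cong) auto
  have "PH1 = (\<Prod>j\<in>{1..n}. \<Prod>i\<in>{1..n}. H (i - 1) j)" unfolding PH1_def by (rule prod.swap)
  hence "PH1 * HN = (\<Prod>j\<in>{1..n}. (\<Prod>i\<in>{1..n}. H (i - 1) j) * H n j)"
    unfolding HN_def prod.distrib by simp
  also have "\<dots> = (\<Prod>j\<in>{1..n}. \<Prod>i\<in>{1..n}. H i j)"
    using prod_tele[of "\<lambda>i. H i _" n] H0 by (intro prod.cong) auto
  also have "\<dots> = PH2" unfolding PH2_def by (rule prod.swap)
  finally have h: "PH1 * HN = PH2" .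
  have nz: "PV1 * PH1 \<noteq> 0" unfolding PV1_def PH1_def using Vnz Hnz by (simp add: prod_nz)
  have "S * (PV1 * PH1) = (S' * VN * HN) * (PV1 * PH1)"
    using e v h by (simp add: ac_simps)
  hence "S = S' * VN * HN" using nz by simp
  thus ?thesis unfolding S_def S'_def VN_def HN_def .
qed

lemma tab_chain:
  fixes C :: "nat \<Rightarrow> diagram"
  assumes C0: "C 0 = {}" and mono: "\<And>i. i < n \<Longrightarrow> C i \<subseteq> C (Suc i)" and k: "k \<le> n"
  shows "{c \<in> C n. (THE i. 1 \<le> i \<and> i \<le> n \<and> c \<in> C i - C (i - 1)) \<le> k} = C k"
proof -
  have M: "i \<le> i' \<Longrightarrow> i' \<le> n \<Longrightarrow> C i \<subseteq> C i'" for i i'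
  proof (induction i')
    case 0 thus ?case by simp
  next
    case (Suc i')
    show ?case
    proof (cases "i = Suc i'")
      case False
      hence "C i \<subseteq> C i'" using Suc by simp
      thus ?thesis using mono[of i'] Suc by auto
    qed simp
  qed
  have T: "(THE i. 1 \<le> i \<and> i \<le> n \<and> c \<in> C i - C (i - 1)) = (LEAST i. c \<in> C i)" if c: "c \<in> C n" for c
  proof (rule the_equality)
    let ?m = "LEAST i. c \<in> C i"
    have m1: "c \<in> C ?m" using c by (rule LeastI)
    have m2: "?m \<le> n" using c by (rule Least_le)
    have m0: "?m \<noteq> 0" using m1 C0 by (metis empty_iff)
    have m3: "c \<notin> C (?m - 1)" using not_less_Least[of "?m - 1" "\<lambda>i. c \<in> C i"] m0 by simp
    show "1 \<le> ?m \<and> ?m \<le> n \<and> c \<in> C ?m - C (?m - 1)" using m0 m1 m2 m3 by simp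
    fix i assume i: "1 \<le> i \<and> i \<le> n \<and> c \<in> C i - C (i - 1)"
    have "?m \<le> i" using i by (intro Least_le) simp
    moreover have "\<not> ?m < i"
    proof
      assume "?m < i"
      hence "?m \<le> i - 1" by linarith
      moreover have "i - 1 \<le> n" using i by linarith
      ultimately have "C ?m \<subseteq> C (i - 1)" by (rule M)
      thus False using m1 i by auto
    qed
    ultimately show "i = ?m" by simp
  qed
  show ?thesis
  proof (intro set_eqI iffI)
    fix c assume "c \<in> {c \<in> C n. (THE i. 1 \<le> i \<and> i \<le> n \<and> c \<in> C i - C (i - 1)) \<le> k}"
    hence c: "c \<in> C n" by simp
    hence le: "(LEAST i. c \<in> C i) \<le> k" using T[OF c] \<open>c \<in> {c \<in> C n. _}\<close> by simp
    have "c \<in> C (LEAST i. c \<in> C i)" using c by (rule LeastI)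
    thus "c \<in> C k" using M[OF le] k by auto
  next
    fix c assume c: "c \<in> C k"
    hence cn: "c \<in> C n" using M[OF k] by auto
    have "(LEAST i. c \<in> C i) \<le> k" using c by (rule Least_le)
    thus "c \<in> {c \<in> C n. (THE i. 1 \<le> i \<and> i \<le> n \<and> c \<in> C i - C (i - 1)) \<le> k}" using T[OF cn] cn by simp
  qed
qed



definition Sset :: "(nat \<Rightarrow> nat) \<Rightarrow> nat \<Rightarrow> nat \<Rightarrow> nat set" where
  "Sset \<sigma> i j = {j'\<in>{1..j}. 1 \<le> \<sigma> j' \<and> \<sigma> j' \<le> i}"

lemma card_pairs: "card {(i', j'). 1 \<le> i' \<and> i' \<le> i \<and> 1 \<le> j' \<and> j' \<le> j \<and> i' = \<sigma> j'} = card (Sset \<sigma> i j)"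
proof -
  have "{(i', j'). 1 \<le> i' \<and> i' \<le> i \<and> 1 \<le> j' \<and> j' \<le> j \<and> i' = \<sigma> j'} = (\<lambda>j'. (\<sigma> j', j')) ` Sset \<sigma> i j"
    unfolding Sset_def by auto
  moreover have "inj_on (\<lambda>j'. (\<sigma> j', j')) (Sset \<sigma> i j)" by (rule inj_onI) auto
  ultimately show ?thesis by (simp add: card_image)
qed

lemma S_col: "1 \<le> j \<Longrightarrow> card (Sset \<sigma> i j) = card (Sset \<sigma> i (j - 1)) + (if 1 \<le> \<sigma> j \<and> \<sigma> j \<le> i then 1 else 0)"
proof -
  assume j: "1 \<le> j"
  have le_j: "x \<le> j \<longleftrightarrow> x \<le> j - 1 \<or> x = j" for x using j by auto
  have e: "Sset \<sigma> i j = (if 1 \<le> \<sigma> j \<and> \<sigma> j \<le> i then insert j (Sset \<sigma> i (j - 1)) else Sset \<sigma> i (j - 1))"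
    unfolding Sset_def using j by (auto simp: le_j)
  have "j \<notin> Sset \<sigma> i (j - 1)" unfolding Sset_def using j by auto
  moreover have "finite (Sset \<sigma> i (j - 1))" unfolding Sset_def by simp
  ultimately show ?thesis by (subst e) simp
qed

lemma S_row: "inj \<sigma> \<Longrightarrow> card (Sset \<sigma> i j) \<le> card (Sset \<sigma> (i - 1) j) + 1"
proof -
  assume inj: "inj \<sigma>"
  have "Sset \<sigma> i j \<subseteq> insert (inv \<sigma> i) (Sset \<sigma> (i - 1) j)"
  proof
    fix j' assume "j' \<in> Sset \<sigma> i j"
    thus "j' \<in> insert (inv \<sigma> i) (Sset \<sigma> (i - 1) j)"
    proof (cases "\<sigma> j' = i")
      case True thus ?thesis using inv_f_f[OF inj, of j'] by simp
    qed (auto simp: Sset_def)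
  qed
  hence "card (Sset \<sigma> i j) \<le> card (insert (inv \<sigma> i) (Sset \<sigma> (i - 1) j))"
    by (rule card_mono[rotated]) (simp add: Sset_def)
  also have "\<dots> \<le> card (Sset \<sigma> (i - 1) j) + 1"
  proof -
    have fin: "finite (Sset \<sigma> (i - 1) j)" unfolding Sset_def by simp
    show ?thesis using fin by (simp add: card_insert_if)
  qed
  finally show ?thesis .
qed

lemma S_eq: assumes inj: "inj \<sigma>" and sj: "\<sigma> j = i" and j: "1 \<le> j"
  shows "Sset \<sigma> i (j - 1) = Sset \<sigma> (i - 1) (j - 1)"
proof (intro set_eqI iffI)
  fix x assume x: "x \<in> Sset \<sigma> i (j - 1)"
  hence "x \<noteq> j" using j unfolding Sset_def by auto
  hence "\<sigma> x \<noteq> i" using inj sj by (metis injD)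
  thus "x \<in> Sset \<sigma> (i - 1) (j - 1)" using x unfolding Sset_def by auto
next
  fix x assume "x \<in> Sset \<sigma> (i - 1) (j - 1)"
  thus "x \<in> Sset \<sigma> i (j - 1)" unfolding Sset_def by auto
qed

lemma S0: "Sset \<sigma> 0 j = {}" "Sset \<sigma> i 0 = {}" unfolding Sset_def by auto

lemma Snn: assumes p: "\<sigma> permutes {1..n}" shows "Sset \<sigma> n n = {1..n}"
proof -
  have h: "1 \<le> \<sigma> x \<and> \<sigma> x \<le> n" if "1 \<le> x" "x \<le> n" for x
  proof -
    have "x \<in> {1..n}" using that by simp
    hence "\<sigma> x \<in> {1..n}" by (simp only: permutes_in_image[OF p])
    thus ?thesis by simp
  qed
  show ?thesis unfolding Sset_def
  proof (intro set_eqI iffI)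
    fix x assume "x \<in> {1..n}" thus "x \<in> {j' \<in> {1..n}. 1 \<le> \<sigma> j' \<and> \<sigma> j' \<le> n}" using h by simp
  qed simp
qed



theorem lemma4p25:
  fixes n :: nat and \<sigma> :: "nat \<Rightarrow> nat" and \<Lambda> :: "nat \<Rightarrow> nat \<Rightarrow> diagram"
  assumes "n \<ge> 1"
    and "\<sigma> permutes {1..n}"
    and "is_growth n \<sigma> \<Lambda>"
  shows "(1 - t_ind) ^ n / (1 - q_ind) ^ n * growthP q_ind t_ind n \<Lambda> =
         growthPbar q_ind t_ind n \<Lambda> * psi_tab q_ind t_ind (\<Lambda> n n) (P_tab n \<Lambda>)
           * phi_tab q_ind t_ind (\<Lambda> n n) (Q_tab n \<Lambda>)"
proof -
  note ok = qt_ok_ind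
  have part: "\<And>i j. i \<le> n \<Longrightarrow> j \<le> n \<Longrightarrow> is_partition (\<Lambda> i j)"
    and right: "\<And>i j. i \<le> n \<Longrightarrow> j < n \<Longrightarrow> \<Lambda> i j \<subseteq> \<Lambda> i (Suc j)"
    and down: "\<And>i j. i < n \<Longrightarrow> j \<le> n \<Longrightarrow> \<Lambda> i j \<subseteq> \<Lambda> (Suc i) j"
    and crd: "\<And>i j. i \<le> n \<Longrightarrow> j \<le> n \<Longrightarrow> card (\<Lambda> i j) = card (Sset \<sigma> i j)"
    using assms(3) unfolding is_growth_def card_pairs by auto
  have inj: "inj \<sigma>" using assms(2) by (rule permutes_inj)
  have E1: "\<Lambda> i 0 = {}" if "i \<le> n" for i
    using crd[of i 0] that part[of i 0] part_finite S0 by simp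
  have E2: "\<Lambda> 0 j = {}" if "j \<le> n" for j
    using crd[of 0 j] that part[of 0 j] part_finite S0 by simp
  define V where "V i j = psi_skew q_ind t_ind (\<Lambda> i j) (\<Lambda> (i - 1) j)" for i j
  define H where "H i j = phiP q_ind t_ind (\<Lambda> i j) (\<Lambda> i (j - 1))" for i j
  have sq: "sqP q_ind t_ind \<Lambda> i j * (V i (j - 1) * H (i - 1) j) = sqPbar q_ind t_ind \<Lambda> i j * (V i j * H i j)"
    if i: "i \<in> {1..n}" and j: "j \<in> {1..n}" for i j
  proof -
    define a where "a = \<Lambda> (i - 1) (j - 1)"
    define b where "b = \<Lambda> (i - 1) j"
    define c where "c = \<Lambda> i (j - 1)"
    define d where "d = \<Lambda> i j"
    have i1: "1 \<le> i" "i \<le> n" and j1: "1 \<le> j" "j \<le> n" using i j by auto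
    have pa: "is_partition a" and pb: "is_partition b" and pc: "is_partition c" and pd: "is_partition d"
      unfolding a_def b_def c_def d_def using part[of "i - 1" "j - 1"] part[of "i - 1" j] part[of i "j - 1"] part[of i j] i1 j1
      by (simp_all add: le_trans[OF diff_le_self])
    have ab: "a \<subseteq> b" unfolding a_def b_def using right[of "i - 1" "j - 1"] i1 j1 by simp
    have cd: "c \<subseteq> d" unfolding c_def d_def using right[of i "j - 1"] i1 j1 by simp
    have ac: "a \<subseteq> c" unfolding a_def c_def using down[of "i - 1" "j - 1"] i1 j1 by simp
    have bd: "b \<subseteq> d" unfolding b_def d_def using down[of "i - 1" j] i1 j1 by simp
    have ca: "card a = card (Sset \<sigma> (i - 1) (j - 1))" unfolding a_def using crd i1 j1 by simp
    have cb: "card b = card (Sset \<sigma> (i - 1) j)" unfolding b_def using crd i1 j1 by simp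
    have cc: "card c = card (Sset \<sigma> i (j - 1))" unfolding c_def using crd i1 j1 by simp
    have cdd: "card d = card (Sset \<sigma> i j)" unfolding d_def using crd i1 j1 by simp
    have b1: "card b = card a + (if 1 \<le> \<sigma> j \<and> \<sigma> j \<le> i - 1 then 1 else 0)"
      unfolding ca cb using S_col[OF j1(1)] .
    have d1: "card d = card c + (if 1 \<le> \<sigma> j \<and> \<sigma> j \<le> i then 1 else 0)"
      unfolding cc cdd using S_col[OF j1(1)] .
    have c1: "card c \<le> card a + 1" unfolding ca cc using S_row[OF inj] .
    have cs: "(card b = card a \<and> card c = card a \<and> card d = card a + 1) \<or> card d + card a = card b + card c"
    proof (cases "\<sigma> j = i")
      case True
      have "card c = card a" unfolding ca cc using S_eq[OF inj True j1(1)] by simp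
      thus ?thesis using b1 d1 True i1 by auto
    next
      case False
      thus ?thesis using b1 d1 i1 by auto
    qed
    have "sqP q_ind t_ind \<Lambda> i j = (if b = c \<and> a \<in> Dns_star b \<and> d \<in> Ups b then locP q_ind t_ind b a d else 1)"
      unfolding sqP_def type_III_def a_def b_def c_def d_def ..
    moreover have "sqPbar q_ind t_ind \<Lambda> i j = (if b = c \<and> a \<in> Dns_star b \<and> d \<in> Ups b then locPbar q_ind t_ind b a d else 1)"
      unfolding sqPbar_def type_III_def a_def b_def c_def d_def ..
    moreover have "V i (j - 1) = psi_skew q_ind t_ind c a" "H (i - 1) j = phiP q_ind t_ind b a"
      "V i j = psi_skew q_ind t_ind d b" "H i j = phiP q_ind t_ind d c"
      unfolding V_def H_def a_def b_def c_def d_def by simp_all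
    ultimately show ?thesis
      using square[OF ok pa pb pc pd ab ac bd cd _ c1 cs] b1 by simp
  qed
  have tel: "growthP q_ind t_ind n \<Lambda> = growthPbar q_ind t_ind n \<Lambda> * (\<Prod>i\<in>{1..n}. V i n) * (\<Prod>j\<in>{1..n}. H n j)"
    unfolding growthP_def growthPbar_def
  proof (rule telescope)
    show "V i 0 = 1" if "i \<in> {1..n}" for i unfolding V_def using E1[of i] E1[of "i - 1"] that le_trans[OF diff_le_self, of i n 1] by (simp add: psi_same)
    show "H 0 j = 1" if "j \<in> {1..n}" for j unfolding H_def using E2[of j] E2[of "j - 1"] that le_trans[OF diff_le_self, of j n 1] by (simp add: phiP_same)
    show "V i j \<noteq> 0" for i j unfolding V_def by (rule psi_nz[OF ok])
    show "H i j \<noteq> 0" for i j unfolding H_def by (rule phiP_nz[OF ok])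
  qed (rule sq)
  have cardn: "card (\<Lambda> n n) = n" using crd[of n n] Snn[OF assms(2)] by simp
  have tabP: "tab_sub (\<Lambda> n n) (P_tab n \<Lambda>) k = \<Lambda> k n" if "k \<le> n" for k
    unfolding tab_sub_def P_tab_def
    using tab_chain[of "\<lambda>i. \<Lambda> i n" n k] E2[of n] down that by simp
  have tabQ: "tab_sub (\<Lambda> n n) (Q_tab n \<Lambda>) k = \<Lambda> n k" if "k \<le> n" for k
    unfolding tab_sub_def Q_tab_def
    using tab_chain[of "\<lambda>i. \<Lambda> n i" n k] E1[of n] right that by simp
  have psiT: "psi_tab q_ind t_ind (\<Lambda> n n) (P_tab n \<Lambda>) = (\<Prod>i\<in>{1..n}. V i n)"
    unfolding psi_tab_def cardn V_def by (intro prod.cong refl) (simp add: tabP le_trans[OF diff_le_self])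
  have phiT: "phi_tab q_ind t_ind (\<Lambda> n n) (Q_tab n \<Lambda>) = ((1 - t_ind) / (1 - q_ind)) ^ n * (\<Prod>j\<in>{1..n}. H n j)"
  proof -
    have "phi_tab q_ind t_ind (\<Lambda> n n) (Q_tab n \<Lambda>) = (\<Prod>j\<in>{1..n}. (1 - t_ind) / (1 - q_ind) * H n j)"
      unfolding phi_tab_def cardn H_def phi_skew_eq[symmetric] by (intro prod.cong refl) (simp add: tabQ le_trans[OF diff_le_self])
    thus ?thesis by (simp only: prod.distrib prod_constant card_atLeastAtMost) simp
  qed
  show ?thesis unfolding tel psiT phiT by (simp add: power_divide ac_simps)
qed

end
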